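(* Let $n=p_1p_2\cdots p_r$, where $r\geq 3$ and $p_1<p_2<\cdots<p_r$ are primes, and let $3\leq s\leq r$. If $\deg(p_{s-1}p_s\cdots p_r)\geq\deg(p_sp_{s+1}\cdots p_r)$ in $\mathcal{P}(C_n)$, then $\deg(p_{s-2}p_{s-1}\cdots p_r)>\deg(p_{s-1}p_s\cdots p_r)$.
   Context: For a finite group $G$, the power graph $\mathcal{P}(G)$ is the simple undirected graph with vertex set $G$ in which two distinct vertices are adjacent if one is an integral power of the other. $C_n$ denotes the cyclic group of order $n$, identified with $\mathbb{Z}_n=\{0,1,\ldots,n-1\}$, so a positive divisor $d$ of $n$ is regarded as the element $d \bmod n\in\mathbb{Z}_n$ (in particular $n$ itself is the element $0$). $\deg(a)$ is the degree of vertex $a$ in $\mathcal{P}(C_n)$. *)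

theory Defs
  imports "HOL-Computational_Algebra.Primes"
begin

text \<open>The cyclic group C_n is identified with Z_n = {0,...,n-1} (additive).
  An integral power of a is k*a mod n for an integer k.\<close>

definition is_power_Zn :: "nat \<Rightarrow> nat \<Rightarrow> nat \<Rightarrow> bool" where
  "is_power_Zn n b a \<longleftrightarrow> (\<exists>k::int. int b = (k * int a) mod int n)"

definition pg_adj :: "nat \<Rightarrow> nat \<Rightarrow> nat \<Rightarrow> bool" where
  "pg_adj n a b \<longleftrightarrow> a \<in> {0..<n} \<and> b \<in> {0..<n} \<and> a \<noteq> b \<and>
     (is_power_Zn n b a \<or> is_power_Zn n a b)"

definition pg_deg :: "nat \<Rightarrow> nat \<Rightarrow> nat" where
  "pg_deg n a = card {b \<in> {0..<n}. pg_adj n a b}"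

end

theory Submission
  imports Defs "HOL-Number_Theory.Totient"
begin


lemma pow_iff1:
  assumes "d dvd n" "b < n"
  shows "is_power_Zn n b d \<longleftrightarrow> d dvd b"
proof
  assume "is_power_Zn n b d"
  then obtain k where k: "int b = (k * int d) mod int n" unfolding is_power_Zn_def by blast
  have "int d dvd (k * int d) mod int n"
    using assms(1) by (simp add: dvd_mod)
  then have "int d dvd int b" using k by simp
  then show "d dvd b" by simp
next
  assume "d dvd b"
  then obtain c where c: "b = d * c" by blast
  have "int b = (int c * int d) mod int n" using assms(2) c
    by (metis mult.commute of_nat_mult of_nat_mod mod_less)
  then show "is_power_Zn n b d" unfolding is_power_Zn_def by blast
qed

lemma pow_iff2:
  assumes "d < n" "b < n"
  shows "is_power_Zn n d b \<longleftrightarrow> gcd b n dvd d"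
proof
  assume "is_power_Zn n d b"
  then obtain k where k: "int d = (k * int b) mod int n" unfolding is_power_Zn_def by blast
  have "gcd (int b) (int n) dvd (k * int b) mod int n"
    by (simp add: dvd_mod)
  then have "gcd (int b) (int n) dvd int d" using k by simp
  then show "gcd b n dvd d"
    by (metis gcd_int_int_eq int_dvd_int_iff)
next
  assume "gcd b n dvd d"
  then obtain e where e: "d = gcd b n * e" by blast
  obtain u v where uv: "u * int b + v * int n = gcd (int b) (int n)"
    using bezout_int by blast
  have "int d = int e * gcd (int b) (int n)" using e by (simp add: gcd_int_int_eq)
  also have "\<dots> = (int e * u) * int b + (int e * v) * int n" using uv by (metis distrib_left mult.assoc)
  finally have "int d mod int n = ((int e * u) * int b) mod int n" by simp
  moreover have "int d mod int n = int d" using assms(1) by simp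
  ultimately show "is_power_Zn n d b" unfolding is_power_Zn_def by metis
qed

lemma coprime_iff:
  fixes b d m n :: nat
  assumes "n = d * m" "coprime d m"
  shows "gcd b n dvd d \<longleftrightarrow> coprime b m"
proof
  assume h: "gcd b n dvd d"
  have "m dvd n" using assms(1) by simp
  then have "gcd b m dvd gcd b n" by (meson dvd_trans gcd_dvd1 gcd_dvd2 gcd_greatest)
  then have "gcd b m dvd d" using h by (rule dvd_trans)
  moreover have "gcd b m dvd m" by simp
  ultimately have "gcd b m dvd gcd d m" by (rule gcd_greatest)
  moreover have "gcd d m = 1" using assms(2) by (simp add: coprime_iff_gcd_eq_1)
  ultimately have "gcd b m dvd 1" by simp
  then show "coprime b m" using coprime_iff_gcd_eq_1 by (metis nat_dvd_1_iff_1)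
next
  assume "coprime b m"
  then have "gcd b (d*m) = gcd b d"
    by (metis coprime_commute gcd.commute gcd_mult_left_right_cancel)
  then show "gcd b n dvd d" using assms(1) by simp
qed

lemma card_lt_coprime:
  assumes "m > 1" shows "card {j. j < m \<and> coprime j m} = totient m"
proof -
  have "{j. j < m \<and> coprime j m} = totatives m"
  proof (auto simp: in_totatives_iff)
    fix j assume "j < m" "coprime j m"
    then show "0 < j" using assms by (cases "j = 0") auto
  next
    fix j assume "j \<le> m" "coprime j m"
    moreover have "\<not> coprime m m" using assms by simp
    ultimately show "j < m" by (cases "j = m") auto
  qed
  then show ?thesis by (simp add: totient_def)
qed

lemma coprime_shift: "coprime (d*m + x) m \<longleftrightarrow> coprime (x::nat) m"
  by (metis coprime_iff_gcd_eq_1 gcd.commute gcd_add_mult mult.commute)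

lemma card_block:
  assumes "m > 1" shows "card {b. b < d * m \<and> coprime b m} = d * totient m"
proof (induction d)
  case 0 then show ?case by simp
next
  case (Suc d)
  have split: "{b. b < Suc d * m \<and> coprime b m} = {b. b < d * m \<and> coprime b m} \<union> (\<lambda>j. d*m + j) ` {j. j < m \<and> coprime j m}"
  proof (rule set_eqI, rule iffI)
    fix x assume "x \<in> {b. b < Suc d * m \<and> coprime b m}"
    then have x: "x < Suc d * m" "coprime x m" by auto
    show "x \<in> {b. b < d * m \<and> coprime b m} \<union> (\<lambda>j. d*m + j) ` {j. j < m \<and> coprime j m}"
    proof (cases "x < d*m")
      case True then show ?thesis using x by auto
    next
      case False
      then have e: "x = d*m + (x - d*m)" by simp
      have "coprime (x - d*m) m" using x(2) coprime_shift[of d m "x - d*m"] e by simp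
      moreover have "x - d*m < m" using x(1) False by simp
      ultimately show ?thesis using e by blast
    qed
  next
    fix x assume "x \<in> {b. b < d * m \<and> coprime b m} \<union> (\<lambda>j. d*m + j) ` {j. j < m \<and> coprime j m}"
    then show "x \<in> {b. b < Suc d * m \<and> coprime b m}"
      using coprime_shift by auto
  qed
  have disj: "{b. b < d * m \<and> coprime b m} \<inter> (\<lambda>j. d*m + j) ` {j. j < m \<and> coprime j m} = {}" by auto
  have "card ((\<lambda>j. d*m + j) ` {j. j < m \<and> coprime j m}) = totient m"
    using card_lt_coprime[OF assms] by (simp add: card_image)
  then show ?case using Suc split disj by (simp add: card_Un_disjoint)
qed

lemma deg_formula:
  fixes d m n :: nat
  assumes n: "n = d*m" and cop: "coprime d m" and d: "d>0" and m: "m>0"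
  shows "int (pg_deg n (d mod n)) = int m + (int d - 1) * int (totient m) - 1"
proof (cases "m = 1")
  case True
  then have nd: "n = d" using n by simp
  have "{b \<in> {0..<n}. pg_adj n (d mod n) b} = {1..<n}"
    using nd d by (auto simp: pg_adj_def is_power_Zn_def intro: exI[of _ 0])
  then show ?thesis using True nd d unfolding pg_deg_def by simp
next
  case False
  then have m1: "m > 1" using m by simp
  have dn: "d < n" using n m1 d by simp
  have dmod: "d mod n = d" using dn by simp
  have dvdn: "d dvd n" using n by simp
  define Adv where "Adv = {b. b < n \<and> d dvd b}"
  define Bc where "Bc = {b. b < n \<and> coprime b m}"
  have eq: "{b \<in> {0..<n}. pg_adj n (d mod n) b} = (Adv \<union> Bc) - {d}"
  proof -
    have "\<And>b. b < n \<Longrightarrow> pg_adj n d b \<longleftrightarrow> b \<noteq> d \<and> (d dvd b \<or> coprime b m)"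
      unfolding pg_adj_def using pow_iff1[OF dvdn] pow_iff2[OF dn] coprime_iff[OF n cop] dn by auto
    then show ?thesis unfolding Adv_def Bc_def dmod by auto
  qed
  have fA: "finite Adv" "finite Bc" unfolding Adv_def Bc_def by auto
  have cA: "card Adv = m"
  proof -
    have "Adv = (\<lambda>j. d*j) ` {..<m}"
      unfolding Adv_def n using d by (auto simp: image_iff)
    then show ?thesis using d by (simp add: card_image inj_on_def)
  qed
  have cB: "card Bc = d * totient m" unfolding Bc_def n using card_block[OF m1] by simp
  have cI: "card (Adv \<inter> Bc) = totient m"
  proof -
    have "Adv \<inter> Bc = (\<lambda>j. d*j) ` {j. j < m \<and> coprime j m}"
      unfolding Adv_def Bc_def n using d cop by (auto simp: image_iff)
    then show ?thesis using d card_lt_coprime[OF m1] by (simp add: card_image inj_on_def)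
  qed
  have "card (Adv \<union> Bc) + card (Adv \<inter> Bc) = card Adv + card Bc"
    using card_Un_Int[OF fA] by simp
  moreover have "d \<in> Adv \<union> Bc" unfolding Adv_def using dn by auto
  ultimately have h0: "card ((Adv \<union> Bc) - {d}) = m + d * totient m - totient m - 1"
    using cA cB cI fA by simp
  have t1: "totient m \<le> d * totient m" using mult_le_mono1[of 1 d "totient m"] d by simp
  have h: "card ((Adv \<union> Bc) - {d}) = m + d * totient m - totient m - 1" "Suc (totient m) \<le> m + d * totient m"
    using h0 apply simp using t1 m by linarith
  have "int (m + d * totient m - totient m - 1) = int (m + d * totient m) - int (Suc (totient m))"
    using h(2) by (simp add: of_nat_diff)
  then show ?thesis unfolding pg_deg_def eq h(1)
    by (simp add: algebra_simps)
qed


lemma arith_key: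
  fixes a f q t N :: int
  assumes f: "f \<ge> 1" and q: "q \<ge> 2" and t: "t \<ge> q + 1" and N: "N \<ge> 1" and a: "a \<ge> 1"
    and H: "a*q + (t*N - 1)*f*(q-1) - 1 \<ge> a*q*t + (N-1)*f*(q-1)*(t-1) - 1"
  shows "a + (q*t*N - 1)*f - 1 > a*q + (t*N - 1)*f*(q-1) - 1"
proof -
  have H1: "f*(q-1)*(N+t-2) \<ge> a*q*(t-1)" using H by (simp add: algebra_simps)
  have G: "a + (q*t*N - 1)*f - 1 - (a*q + (t*N - 1)*f*(q-1) - 1) = f*(t*N+q-2) - a*(q-1)"
    by (simp add: algebra_simps)
  have qt: "q*(t-1) > 0" using q t by simp
  have C: "q*t*(t-1) - (q-1)^2 \<ge> 0"
  proof -
    have "t*(t-1) \<ge> t*1" using t q by (intro mult_left_mono) auto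
    then have "t*(t-1) \<ge> q" using t by linarith
    then have "q*(t*(t-1)) \<ge> q*q" using q by (intro mult_left_mono) auto
    moreover have "q*q - (q-1)^2 = 2*q - 1" by (simp add: power2_eq_square algebra_simps)
    moreover have "q*t*(t-1) = q*(t*(t-1))" by (simp add: algebra_simps)
    ultimately show ?thesis using q by linarith
  qed
  define N0 where "N0 = N - 1"
  have N0: "N0 \<ge> 0" using N N0_def by simp
  have X: "q*(t-1)*(t*N+q-2) - (q-1)^2*(N+t-2) = N0*(q*t*(t-1) - (q-1)^2) + (t-1)*(q*t-1)"
    unfolding N0_def by (simp add: algebra_simps power2_eq_square)
  have "q*t \<ge> 2*1" using q t by (intro mult_mono) auto
  then have "(t-1)*(q*t-1) > 0" using q t by (intro mult_pos_pos) auto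
  moreover have "N0*(q*t*(t-1) - (q-1)^2) \<ge> 0" using N0 C by simp
  ultimately have Xp: "q*(t-1)*(t*N+q-2) - (q-1)^2*(N+t-2) > 0" using X by linarith
  have "a*(q-1)*(q*(t-1)) = (q-1)*(a*q*(t-1))" by (simp add: algebra_simps)
  also have "\<dots> \<le> (q-1)*(f*(q-1)*(N+t-2))" using H1 q by (intro mult_left_mono) auto
  also have "\<dots> = f*((q-1)^2*(N+t-2))" by (simp add: algebra_simps power2_eq_square)
  also have "\<dots> < f*(q*(t-1)*(t*N+q-2))" using Xp f by (intro mult_strict_left_mono) auto
  also have "\<dots> = f*(t*N+q-2)*(q*(t-1))" by (simp add: algebra_simps)
  finally have "a*(q-1) < f*(t*N+q-2)" using qt by (simp add: mult_less_cancel_right)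
  then show ?thesis using G by linarith
qed

lemma prod_split:
  fixes g :: "nat \<Rightarrow> nat"
  assumes "a \<le> Suc j" "j \<le> b"
  shows "prod g {a..b} = prod g {a..j} * prod g {Suc j..b}"
proof -
  have "{a..b} = {a..j} \<union> {Suc j..b}" using assms by auto
  then show ?thesis by (simp add: prod.union_disjoint ivl_disj_int)
qed

lemma cop_sets:
  fixes p :: "nat \<Rightarrow> nat"
  assumes pr: "\<forall>i\<in>{1..r}. prime (p i)"
    and mono: "\<forall>i\<in>{1..r}. \<forall>j\<in>{1..r}. i < j \<longrightarrow> p i < p j"
    and "I \<subseteq> {1..r}" "J \<subseteq> {1..r}" "I \<inter> J = {}"
  shows "coprime (prod p I) (prod p J)"
proof (intro prod_coprime_left prod_coprime_right)
  fix i j assume i: "i \<in> I" and j: "j \<in> J"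
  then have ij: "i \<in> {1..r}" "j \<in> {1..r}" "i \<noteq> j" using assms by auto
  then have "p i \<noteq> p j" using mono by (metis less_irrefl linorder_neqE_nat)
  then show "coprime (p i) (p j)" using pr ij primes_coprime by blast
qed

lemma prod_pos:
  fixes p :: "nat \<Rightarrow> nat"
  assumes pr: "\<forall>i\<in>{1..r}. prime (p i)" and "I \<subseteq> {1..r}"
  shows "prod p I \<ge> 1"
  using assms by (intro prod_ge_1) (auto simp: prime_gt_0_nat Suc_leI dest!: subsetD prime_gt_0_nat)

theorem lemma3p3:
  fixes p :: "nat \<Rightarrow> nat" and r s n :: nat
  assumes "r \<ge> 3"
    and "\<forall>i\<in>{1..r}. prime (p i)"
    and "\<forall>i\<in>{1..r}. \<forall>j\<in>{1..r}. i < j \<longrightarrow> p i < p j"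
    and "n = (\<Prod>i=1..r. p i)"
    and "3 \<le> s" and "s \<le> r"
    and "pg_deg n ((\<Prod>i=s-1..r. p i) mod n) \<ge> pg_deg n ((\<Prod>i=s..r. p i) mod n)"
  shows "pg_deg n ((\<Prod>i=s-2..r. p i) mod n) > pg_deg n ((\<Prod>i=s-1..r. p i) mod n)"
proof -
  note pr = assms(2) and mono = assms(3)
  define m3 where "m3 = prod p {1..s-3}"
  define m2 where "m2 = prod p {1..s-2}"
  define m1 where "m1 = prod p {1..s-1}"
  define d1 where "d1 = prod p {s..r}"
  define d2 where "d2 = prod p {s-1..r}"
  define d3 where "d3 = prod p {s-2..r}"
  define q where "q = p (s-2)"
  define t where "t = p (s-1)"
  have qt: "q < t" unfolding q_def t_def
  proof -
    have "s-2 \<in> {1..r}" "s-1 \<in> {1..r}" "s-2 < s-1" using assms(5,6) by auto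
    then show "p (s-2) < p (s-1)" using mono by blast
  qed
  have qp: "prime q" "prime t"
  proof -
    have "s-2 \<in> {1..r}" "s-1 \<in> {1..r}" using assms(5,6) by auto
    then show "prime q" "prime t" unfolding q_def t_def using pr by blast+
  qed
  have q2: "q \<ge> 2" using qp prime_ge_2_nat by blast
  have n1: "n = m1 * d1" unfolding m1_def d1_def assms(4)
    using prod_split[of 1 "s-1" r p] assms(5,6) by simp
  have n2: "n = m2 * d2" unfolding m2_def d2_def assms(4)
    using prod_split[of 1 "s-2" r p] assms(5,6) by (simp add: Suc_diff_Suc numeral_eq_Suc)
  have n3: "n = m3 * d3" unfolding m3_def d3_def assms(4)
    using prod_split[of 1 "s-3" r p] assms(5,6) by (simp add: Suc_diff_Suc numeral_eq_Suc)
  have m2e: "m2 = m3 * q" unfolding m2_def m3_def q_def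
    using prod_split[of 1 "s-3" "s-2" p] assms(5,6) by (simp add: Suc_diff_Suc numeral_eq_Suc)
  have m1e: "m1 = m2 * t" unfolding m1_def m2_def t_def
    using prod_split[of 1 "s-2" "s-1" p] assms(5,6) by (simp add: Suc_diff_Suc numeral_eq_Suc)
  have d2e: "d2 = t * d1" unfolding d1_def d2_def t_def
    using prod_split[of "s-1" "s-1" r p] assms(5,6) by simp
  have d3e: "d3 = q * d2" unfolding d3_def d2_def q_def
    using prod_split[of "s-2" "s-2" r p] assms(5,6) by (simp add: Suc_diff_Suc numeral_eq_Suc)
  have c1: "coprime d1 m1" unfolding d1_def m1_def
    by (rule cop_sets[OF pr mono]) (use assms(5,6) in auto)
  have c2: "coprime d2 m2" unfolding d2_def m2_def
    by (rule cop_sets[OF pr mono]) (use assms(5,6) in auto)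
  have c3: "coprime d3 m3" unfolding d3_def m3_def
    by (rule cop_sets[OF pr mono]) (use assms(5,6) in auto)
  have cq: "coprime m3 q"
  proof -
    have "coprime (prod p {1..s-3}) (prod p {s-2..s-2})"
      by (rule cop_sets[OF pr mono]) (use assms(5,6) in auto)
    then show ?thesis unfolding m3_def q_def by simp
  qed
  have ct: "coprime m2 t"
  proof -
    have "coprime (prod p {1..s-2}) (prod p {s-1..s-1})"
      by (rule cop_sets[OF pr mono]) (use assms(5,6) in auto)
    then show ?thesis unfolding m2_def t_def by simp
  qed
  have pos: "m3 \<ge> 1" "d1 \<ge> 1" "m1 \<ge> 1" "m2 \<ge> 1" "d2 \<ge> 1" "d3 \<ge> 1"
    unfolding m3_def d1_def m1_def m2_def d2_def d3_def
    by (rule prod_pos[OF pr]; use assms(5,6) in auto)+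
  have tot2: "totient m2 = totient m3 * (q - 1)"
    using m2e cq totient_mult_coprime totient_prime qp by simp
  have tot1: "totient m1 = totient m2 * (t - 1)"
    using m1e ct totient_mult_coprime totient_prime qp by simp
  have D1: "int (pg_deg n (d1 mod n)) = int m1 + (int d1 - 1) * int (totient m1) - 1"
    by (rule deg_formula) (use n1 c1 pos in auto)
  have D2: "int (pg_deg n (d2 mod n)) = int m2 + (int d2 - 1) * int (totient m2) - 1"
    by (rule deg_formula) (use n2 c2 pos in auto)
  have D3: "int (pg_deg n (d3 mod n)) = int m3 + (int d3 - 1) * int (totient m3) - 1"
    by (rule deg_formula) (use n3 c3 pos in auto)
  define a where "a = int m3"
  define f where "f = int (totient m3)"
  define Q where "Q = int q"
  define T where "T = int t"
  define N where "N = int d1"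
  have iq: "int (q - 1) = Q - 1" "int (t - 1) = T - 1" unfolding Q_def T_def using q2 qt by auto
  have I1: "int m1 = a*Q*T" "int (totient m1) = f*(Q-1)*(T-1)" "int m2 = a*Q" "int (totient m2) = f*(Q-1)"
    "int d2 = T*N" "int d3 = Q*T*N"
    unfolding a_def f_def Q_def T_def N_def using iq m1e m2e tot1 tot2 d2e d3e by (simp_all add: Q_def T_def)
  have E1: "int (pg_deg n (d1 mod n)) = a*Q*T + (N-1)*f*(Q-1)*(T-1) - 1"
    unfolding D1 I1 N_def by simp
  have E2: "int (pg_deg n (d2 mod n)) = a*Q + (T*N - 1)*f*(Q-1) - 1"
    unfolding D2 I1 by (simp add: algebra_simps)
  have E3: "int (pg_deg n (d3 mod n)) = a + (Q*T*N - 1)*f - 1"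
    unfolding D3 I1 a_def f_def by (simp add: algebra_simps)
  have H: "a*Q + (T*N - 1)*f*(Q-1) - 1 \<ge> a*Q*T + (N-1)*f*(Q-1)*(T-1) - 1"
    using assms(7) E1 E2 unfolding d1_def d2_def by linarith
  have "a + (Q*T*N - 1)*f - 1 > a*Q + (T*N - 1)*f*(Q-1) - 1"
    by (rule arith_key[OF _ _ _ _ _ H]) (use pos q2 qt in \<open>auto simp: f_def a_def Q_def T_def N_def Suc_le_eq\<close>)
  then show ?thesis using E2 E3 unfolding d2_def d3_def by linarith
qed

end
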